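(* Let $\tau_0>0$, $\rho>1$, $n\ge 1$ an integer, and let $k_a,k_p,k_v,h_w>0$. For unknown constants $\gamma_0,\dots,\gamma_{n-1}\in(0,1)$ put $$\tilde k_a:=\Big[1-\tfrac{1}{\rho}+\tfrac{1}{\rho}\sum_{j=0}^{n-1}\tfrac{\gamma_j}{2^j}\Big]k_a ,$$ so that $\tilde k_a$ can take any value in $\big[(1-\tfrac1\rho)k_a,\,(1+\tfrac1\rho)k_a\big]$. For $\tau\in(0,\tau_0]$ define $$\tilde H(s;\tau)=\frac{\tilde k_a s^2+k_v s+k_p}{\tau s^3+s^2+\gamma s+k_p},\qquad \gamma:=k_v+h_w k_p .$$ Then: (a) If $\|\tilde H(j\omega;\tau)\|_\infty\le 1$ for all $\tau\in(0,\tau_0]$, then $\tilde k_a\in(0,1)$. (b) Let $k_a\in\big(0,\frac{1}{1+1/\rho}\big)$ and let $h_w$ satisfy $$h_w>h_{w,lb}(k_a):=2\tau_0\,\frac{1-\left(1-\frac1\rho\right)k_a}{1-\left(1+\frac1\rho\right)^2k_a^2}.$$ Then there exist $k_p,k_v>0$, not depending on the unknown $\gamma_0,\dots,\gamma_{n-1}\in(0,1)$, such that $\tilde H(s;\tau)$ is internally stable and $\|\tilde H(j\omega;\tau)\|_\infty\le 1$ for all $\tau\in(0,\tau_0]$ and every admissible value of $\tilde k_a$. (c) For every $\rho>1$, the minimizer $k_a^*$ of $h_{w,lb}(k_a)$ over $k_a\in\big(0,\frac{1}{1+1/\rho}\big)$ and the corresponding minimum value $h^*_{w,lb}=h_{w,lb}(k_a^*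 )$ are $$k_a^*=\left(\frac{1-\frac{1}{\sqrt\rho}}{1+\frac{1}{\sqrt\rho}}\right)\frac{1}{1+\frac1\rho},\qquad h^*_{w,lb}=\tau_0\,\frac{\left(1+\frac{1}{\sqrt\rho}\right)^2}{1+\frac1\rho}.$$ Correspondingly, with $k_a=k_a^*$ and any $h_w>h^*_{w,lb}$, there exist $k_p,k_v>0$, not depending on the unknown $\gamma_j$, such that $\|\tilde H(j\omega;\tau)\|_\infty\le 1$ for all $\tau\in(0,\tau_0]$.
   Context: The setting is a vehicle platoon. Vehicle $i$ obeys $\ddot x_i=a_i$ and $\tau\dot a_i+a_i=u_i$, where $\tau\in(0,\tau_0]$ is an uncertain parasitic actuation lag. Each vehicle uses the control law $$u_i=k_a w_{i,i-1}(t)a_{i-1}-k_v(v_i-v_{i-1})-k_p\delta_i ,$$ where $\delta_i=x_i-x_{i-1}+d+h_w v_i$ and $h_w$ is the time headway. The communicated acceleration of the predecessor is corrupted by noise: $$w_{i,i-1}(t)=\Big(1-\tfrac1\rho\Big)+\tfrac1\rho\sum_{j=0}^{n-1}\frac{z_{i,j}(t)}{2^j},$$ where the $z_{i,j}$ are independent binary random processes with time-invariant, unknown means $\gamma_j\in(0,1)$ and $\rho>1$ is the signal-to-noise ratio factor. Taking expectations gives the averaged spacing-error propagation $\bar\delta_i(s)=\tilde H(s;\tau)\bar\delta_{i-1}(s)$, with $\tilde k_a=k_a\,\mathbb E[w_{i,i-1}]$. Here $\|\tilde H(j\omega;\tau)\|_\infty=\sup_{\omega\in\mathbb R}|\tilde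 H(j\omega;\tau)|$. Robust string stability means that $\tilde H$ is internally stable (its denominator is Hurwitz) and $\|\tilde H(j\omega;\tau)\|_\infty\le1$ for all $\tau\in(0,\tau_0]$. *)

theory Defs
  imports Complex_Main "HOL-Library.Extended_Real"
begin

definition ka_tilde :: "real \<Rightarrow> nat \<Rightarrow> (nat \<Rightarrow> real) \<Rightarrow> real \<Rightarrow> real" where
  "ka_tilde \<rho> n g ka = (1 - 1/\<rho> + (1/\<rho>) * (\<Sum>j<n. g j / 2 ^ j)) * ka"

definition admissible_gammas :: "nat \<Rightarrow> (nat \<Rightarrow> real) \<Rightarrow> bool" where
  "admissible_gammas n g \<longleftrightarrow> (\<forall>j<n. 0 < g j \<and> g j < 1)"

definition H_num :: "real \<Rightarrow> real \<Rightarrow> real \<Rightarrow> complex \<Rightarrow> complex" where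
  "H_num kat kv kp s = of_real kat * s ^ 2 + of_real kv * s + of_real kp"

definition H_den :: "real \<Rightarrow> real \<Rightarrow> real \<Rightarrow> real \<Rightarrow> complex \<Rightarrow> complex" where
  "H_den kv kp hw \<tau> s = of_real \<tau> * s ^ 3 + s ^ 2 + of_real (kv + hw * kp) * s + of_real kp"

definition H_tilde :: "real \<Rightarrow> real \<Rightarrow> real \<Rightarrow> real \<Rightarrow> real \<Rightarrow> complex \<Rightarrow> complex" where
  "H_tilde kat kv kp hw \<tau> s = H_num kat kv kp s / H_den kv kp hw \<tau> s"

definition Hinf_norm :: "real \<Rightarrow> real \<Rightarrow> real \<Rightarrow> real \<Rightarrow> real \<Rightarrow> ereal" where
  "Hinf_norm kat kv kp hw \<tau> =
     (SUP \<omega>::real. (if H_den kv kp hw \<tau> (\<i> * of_real \<omega>) = 0 then \<infinity>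
                    else ereal (cmod (H_tilde kat kv kp hw \<tau> (\<i> * of_real \<omega>)))))"

definition internally_stable :: "real \<Rightarrow> real \<Rightarrow> real \<Rightarrow> real \<Rightarrow> bool" where
  "internally_stable kv kp hw \<tau> \<longleftrightarrow> (\<forall>s. H_den kv kp hw \<tau> s = 0 \<longrightarrow> Re s < 0)"

definition h_wlb :: "real \<Rightarrow> real \<Rightarrow> real \<Rightarrow> real" where
  "h_wlb \<tau>0 \<rho> ka = 2 * \<tau>0 * (1 - (1 - 1/\<rho>) * ka) / (1 - (1 + 1/\<rho>)^2 * ka^2)"

end

theory Submission
  imports Defs
begin
lemma num_eq: "H_num kat kv kp (\<i> * of_real w) = Complex (kp - kat*w^2) (kv*w)"
  by (simp add: H_num_def complex_eq_iff power2_eq_square)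
lemma den_eq: "H_den kv kp hw \<tau> (\<i> * of_real w) = Complex (kp - w^2) ((kv+hw*kp)*w - \<tau>*w^3)"
  by (simp add: H_den_def complex_eq_iff power2_eq_square power3_eq_cube)
lemma cmod_le_iff: "cmod (Complex a b) \<le> cmod (Complex c d) \<longleftrightarrow> a^2+b^2 \<le> c^2+d^2"
  by (simp add: complex_norm)
lemma Hinf_le1_iff: "Hinf_norm kat kv kp hw \<tau> \<le> 1 \<longleftrightarrow>
  (\<forall>w. H_den kv kp hw \<tau> (\<i> * of_real w) \<noteq> 0 \<and>
       cmod (H_num kat kv kp (\<i> * of_real w)) \<le> cmod (H_den kv kp hw \<tau> (\<i> * of_real w)))"
  unfolding Hinf_norm_def SUP_le_iff H_tilde_def
  by (auto simp: norm_divide divide_le_eq_1)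
lemma geo: "(\<Sum>j<n. 1/2^j::real) = 2 - 2/2^n"
  by (induction n) (auto simp: field_simps)
lemma hurwitz:
  fixes s :: complex
  assumes "\<tau>>0" "kp>0" "\<gamma>>0" "\<gamma> > \<tau>*kp"
    and eq: "of_real \<tau> * s^3 + s^2 + of_real \<gamma> * s + of_real kp = 0"
  shows "Re s < 0"
proof (rule ccontr)
  assume "\<not> Re s < 0"
  then have a: "Re s \<ge> 0" by simp
  obtain a b where s: "s = Complex a b" by (metis complex.collapse)
  with a have a0: "a \<ge> 0" by simp
  from eq have re: "\<tau>*(a^3 - 3*a*b^2) + (a^2 - b^2) + \<gamma>*a + kp = 0"
    and im: "\<tau>*(3*a^2*b - b^3) + 2*a*b + \<gamma>*b = 0"
    unfolding s by (simp_all add: complex_eq_iff power2_eq_square power3_eq_cube algebra_simps)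
  show False
  proof (cases "b = 0")
    case True
    then have "\<tau>*a^3 + a^2 + \<gamma>*a + kp = 0" using re by simp
    moreover have "\<tau>*a^3 + a^2 + \<gamma>*a + kp > 0" using a0 assms(1-3)
      by (simp add: add_nonneg_pos)
    ultimately show False by simp
  next
    case False
    have "b*(\<tau>*(3*a^2 - b^2) + 2*a + \<gamma>) = 0" using im by (simp add: algebra_simps power2_eq_square power3_eq_cube)
    with False have "\<tau>*(3*a^2 - b^2) + 2*a + \<gamma> = 0" by simp
    then have i2: "\<tau>*b^2 = 3*\<tau>*a^2 + 2*a + \<gamma>" by (simp add: algebra_simps)
    have "\<tau>*(\<tau>*a^3 + a^2 + \<gamma>*a + kp) = (\<tau>*b^2)*(3*\<tau>*a+1)"
      using re by (simp add: algebra_simps power2_eq_square power3_eq_cube) 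
    also have "\<dots> = (3*\<tau>*a^2 + 2*a + \<gamma>)*(3*\<tau>*a+1)" using i2 by simp
    finally have e: "\<tau>*(\<tau>*a^3 + a^2 + \<gamma>*a + kp) = (3*\<tau>*a^2 + 2*a + \<gamma>)*(3*\<tau>*a+1)" .
    have "(3*\<tau>*a^2 + 2*a + \<gamma>)*(3*\<tau>*a+1) - \<tau>*(\<tau>*a^3 + a^2 + \<gamma>*a + kp)
       = 8*\<tau>^2*a^3 + 8*\<tau>*a^2 + 2*a + 2*\<tau>*\<gamma>*a + (\<gamma> - \<tau>*kp)"
      by (simp add: algebra_simps power2_eq_square power3_eq_cube)
    moreover have "8*\<tau>^2*a^3 + 8*\<tau>*a^2 + 2*a + 2*\<tau>*\<gamma>*a + (\<gamma> - \<tau>*kp) > 0"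
      using a0 assms(1-4) by (intro add_nonneg_pos) auto
    ultimately show False using e by simp
  qed
qed
lemma poly_id: "(((kp::real) - w^2)^2 + ((kv+hw*kp)*w - \<tau>*w^3)^2) - ((kp - kat*w^2)^2 + (kv*w)^2)
   = w^2 * ((kv+hw*kp)^2 - kv^2 - 2*kp*(1-kat)) + (w^2)^2 * (1 - kat^2 - 2*(kv+hw*kp)*\<tau>) + \<tau>^2*(w^2)^3"
  by (simp add: algebra_simps power2_eq_square power3_eq_cube)

lemma design:
  assumes t0: "\<tau>0 > 0" and k: "0 < kmin" "kmin \<le> kmax" "kmax < 1"
    and hw: "hw > 2*\<tau>0*(1-kmin)/(1-kmax^2)"
  shows "\<exists>kp kv. kp > 0 \<and> kv > 0 \<and> (\<forall>kat \<tau>. kmin \<le> kat \<and> kat \<le> kmax \<and> 0 < \<tau> \<and> \<tau> \<le> \<tau>0 \<longrightarrow>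
     internally_stable kv kp hw \<tau> \<and> Hinf_norm kat kv kp hw \<tau> \<le> 1)"
proof -
  have km2: "kmax^2 < 1" using k by (simp add: abs_square_less_1)
  have pos1: "1 - kmax^2 > 0" using km2 by simp
  have "2*\<tau>0*(1-kmin)/(1-kmax^2) > 0" using t0 k pos1 by (intro divide_pos_pos mult_pos_pos) auto
  then have hwpos: "hw > 0" using hw by linarith
  define A where "A = (1-kmax^2)/(2*\<tau>0)"
  define B where "B = (1-kmin)/hw"
  have Bpos: "B > 0" using k hwpos by (simp add: B_def)
  have "hw*(1-kmax^2) > 2*\<tau>0*(1-kmin)" using hw pos1 by (simp add: pos_divide_less_eq mult.commute)
  then have BA: "B < A" unfolding A_def B_def using hwpos t0
    by (simp add: divide_simps) (simp add: mult.commute)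
  define kv where "kv = (A+B)/2"
  define kp where "kp = (A-B)/(2*(hw+\<tau>0))"
  have kvpos: "kv > 0" using Bpos BA by (simp add: kv_def)
  have kppos: "kp > 0" using BA hwpos t0 by (simp add: kp_def)
  have hwkp: "hw*kp < (A-B)/2" and t0kp: "\<tau>0*kp < (A-B)/2"
    using BA hwpos t0 by (simp_all add: kp_def field_simps)
  define \<gamma> where "\<gamma> = kv + hw*kp"
  have AB: "(A+B)/2 + (A-B)/2 = A" by (simp add: field_simps)
  have gA: "\<gamma> \<le> A" using hwkp AB unfolding \<gamma>_def kv_def by linarith
  have "hw*kp > 0" using kppos hwpos by simp
  then have gpos: "\<gamma> > 0" using kvpos unfolding \<gamma>_def by linarith
  have kvB: "kv \<ge> B" using BA by (simp add: kv_def)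
  have "\<forall>kat \<tau>. kmin \<le> kat \<and> kat \<le> kmax \<and> 0 < \<tau> \<and> \<tau> \<le> \<tau>0 \<longrightarrow>
     internally_stable kv kp hw \<tau> \<and> Hinf_norm kat kv kp hw \<tau> \<le> 1"
  proof (intro allI impI)
    fix kat \<tau> assume a: "kmin \<le> kat \<and> kat \<le> kmax \<and> 0 < \<tau> \<and> \<tau> \<le> \<tau>0"
    have "\<tau>*kp \<le> \<tau>0*kp" using a kppos by simp
    moreover have "(A-B)/2 < kv" unfolding kv_def using Bpos by simp
    ultimately have gt: "\<gamma> > \<tau>*kp" using t0kp \<open>hw*kp>0\<close> unfolding \<gamma>_def by linarith
    have st: "internally_stable kv kp hw \<tau>"
      unfolding internally_stable_def H_den_def
      using hurwitz[of \<tau> kp \<gamma>] a kppos gpos gt by (auto simp: \<gamma>_def)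
    have c: "(kv+hw*kp)^2 - kv^2 - 2*kp*(1-kat) \<ge> 0"
    proof -
      have "1 - kmin \<le> kv*hw" using kvB hwpos unfolding B_def by (simp add: pos_divide_le_eq)
      then have "hw*kv \<ge> 1 - kat" using a by (simp add: mult.commute)
      moreover have "hw^2*kp \<ge> 0" using kppos by simp
      ultimately have "2*(hw*kv) + hw^2*kp - 2*(1-kat) \<ge> 0" by argo
      then have "kp*(2*(hw*kv) + hw^2*kp - 2*(1-kat)) \<ge> 0" using kppos by simp
      moreover have "(kv+hw*kp)^2 - kv^2 - 2*kp*(1-kat) = kp*(2*(hw*kv) + hw^2*kp - 2*(1-kat))"
        by (simp add: algebra_simps power2_eq_square)
      ultimately show ?thesis by simp
    qed
    have q: "1 - kat^2 - 2*(kv+hw*kp)*\<tau> \<ge> 0"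
    proof -
      have "kat^2 \<le> kmax^2" using a k by (intro power_mono) auto
      moreover have "\<gamma>*\<tau> \<le> A*\<tau>0" using gA a gpos by (intro mult_mono) auto
      moreover have "2*(A*\<tau>0) = 1 - kmax^2" using t0 by (simp add: A_def)
      ultimately show ?thesis unfolding \<gamma>_def by linarith
    qed
    have "Hinf_norm kat kv kp hw \<tau> \<le> 1"
      unfolding Hinf_le1_iff
    proof
      fix w :: real
      have "H_den kv kp hw \<tau> (\<i> * of_real w) \<noteq> 0"
        using st unfolding internally_stable_def by force
      moreover have "(kp - kat*w^2)^2 + (kv*w)^2 \<le> (kp - w^2)^2 + ((kv+hw*kp)*w - \<tau>*w^3)^2"
      proof -
        have "0 \<le> w^2 * ((kv+hw*kp)^2 - kv^2 - 2*kp*(1-kat)) + (w^2)^2 * (1 - kat^2 - 2*(kv+hw*kp)*\<tau>) + \<tau>^2*(w^2)^3"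
          using c q by (intro add_nonneg_nonneg mult_nonneg_nonneg) auto
        then show ?thesis using poly_id[of kp w kv hw \<tau> kat] by linarith
      qed
      ultimately show "H_den kv kp hw \<tau> (\<i> * of_real w) \<noteq> 0 \<and>
       cmod (H_num kat kv kp (\<i> * of_real w)) \<le> cmod (H_den kv kp hw \<tau> (\<i> * of_real w))"
        by (simp add: num_eq den_eq cmod_le_iff)
    qed
    with st show "internally_stable kv kp hw \<tau> \<and> Hinf_norm kat kv kp hw \<tau> \<le> 1" by simp
  qed
  with kppos kvpos show ?thesis by blast
qed
lemma sum_bounds:
  assumes "admissible_gammas n g"
  shows "0 \<le> (\<Sum>j<n. g j / 2 ^ j)" "(\<Sum>j<n. g j / 2 ^ j) \<le> (2::real)"
proof -
  show "0 \<le> (\<Sum>j<n. g j / 2 ^ j)" using assms unfolding admissible_gammas_def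
    by (intro sum_nonneg) (simp add: less_imp_le)
  have "(\<Sum>j<n. g j / 2 ^ j) \<le> (\<Sum>j<n. 1 / 2 ^ j)" using assms unfolding admissible_gammas_def
    by (intro sum_mono) (simp add: divide_right_mono less_imp_le)
  also have "\<dots> = 2 - 2/2^n" by (rule geo)
  also have "\<dots> \<le> 2" by simp
  finally show "(\<Sum>j<n. g j / 2 ^ j) \<le> (2::real)" .
qed

lemma kat_bounds:
  assumes "\<rho> > 1" "ka > 0" "admissible_gammas n g"
  shows "(1-1/\<rho>)*ka \<le> ka_tilde \<rho> n g ka" "ka_tilde \<rho> n g ka \<le> (1+1/\<rho>)*ka"
proof -
  define S where "S = (\<Sum>j<n. g j / 2 ^ j)"
  have S: "0 \<le> S" "S \<le> 2" using sum_bounds[OF assms(3)] by (auto simp: S_def)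
  have r: "1/\<rho> > 0" using assms by simp
  have c1: "0 \<le> (1/\<rho>)*S" using S r by simp
  have c2: "(1/\<rho>)*S \<le> (1/\<rho>)*2" by (rule mult_left_mono) (use S r in auto)
  from c1 c2 have c: "1-1/\<rho> \<le> 1 - 1/\<rho> + (1/\<rho>)*S" "1 - 1/\<rho> + (1/\<rho>)*S \<le> 1+1/\<rho>" by argo+
  have e: "ka_tilde \<rho> n g ka = (1 - 1/\<rho> + (1/\<rho>)*S) * ka" by (simp add: ka_tilde_def S_def)
  show "(1-1/\<rho>)*ka \<le> ka_tilde \<rho> n g ka" unfolding e using c assms(2) by (intro mult_right_mono) auto
  show "ka_tilde \<rho> n g ka \<le> (1+1/\<rho>)*ka" unfolding e using c assms(2) by (intro mult_right_mono) auto
qed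

lemma partA:
  assumes rho: "\<rho> > 1" and pos: "ka > 0" "kp > 0" "kv > 0" "hw > 0" and adm: "admissible_gammas n g"
    and t0: "\<tau>0 > 0"
    and H: "\<forall>\<tau>. 0 < \<tau> \<and> \<tau> \<le> \<tau>0 \<longrightarrow> Hinf_norm (ka_tilde \<rho> n g ka) kv kp hw \<tau> \<le> 1"
  shows "0 < ka_tilde \<rho> n g ka \<and> ka_tilde \<rho> n g ka < 1"
proof -
  define kat where "kat = ka_tilde \<rho> n g ka"
  have "(1-1/\<rho>)*ka \<le> kat" using kat_bounds[OF rho pos(1) adm] by (simp add: kat_def)
  moreover have "(1-1/\<rho>)*ka > 0" using rho pos by simp
  ultimately have katpos: "kat > 0" by linarith
  have "kat < 1"
  proof (rule ccontr)
    assume "\<not> kat < 1"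
    then have k1: "kat \<ge> 1" by simp
    define \<gamma> where "\<gamma> = kv + hw*kp"
    have "hw*kp > 0" using pos by simp
    then have gpos: "\<gamma> > 0" using pos unfolding \<gamma>_def by linarith
    define \<tau>1 where "\<tau>1 = min \<tau>0 (\<gamma>/kp)"
    have t1: "0 < \<tau>1" "\<tau>1 \<le> \<tau>0" "\<tau>1 \<le> \<gamma>/kp" using t0 gpos pos by (auto simp: \<tau>1_def)
    define X where "X = \<gamma>/\<tau>1"
    have Xpos: "X > 0" using gpos t1 by (simp add: X_def)
    have tX: "\<tau>1 * X = \<gamma>" using t1 by (simp add: X_def)
    have "\<tau>1 * kp \<le> \<gamma>" using t1(3) pos by (simp add: pos_le_divide_eq)
    then have Xkp: "kp \<le> X" using t1(1) tX by (metis mult_le_cancel_left_pos)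
    define w where "w = sqrt X"
    have w2: "w^2 = X" using Xpos by (simp add: w_def)
    have "Hinf_norm kat kv kp hw \<tau>1 \<le> 1" using H t1 by (simp add: kat_def)
    then have "cmod (H_num kat kv kp (\<i> * of_real w)) \<le> cmod (H_den kv kp hw \<tau>1 (\<i> * of_real w))"
      unfolding Hinf_le1_iff by blast
    then have le: "(kp - kat*w^2)^2 + (kv*w)^2 \<le> (kp - w^2)^2 + ((kv+hw*kp)*w - \<tau>1*w^3)^2"
      by (simp add: num_eq den_eq cmod_le_iff)
    have "((kp - w^2)^2 + ((kv+hw*kp)*w - \<tau>1*w^3)^2) - ((kp - kat*w^2)^2 + (kv*w)^2)
       = w^2 * ((kv+hw*kp)^2 - kv^2 - 2*kp*(1-kat)) + (w^2)^2 * (1 - kat^2 - 2*(kv+hw*kp)*\<tau>1) + \<tau>1^2*(w^2)^3"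
      by (rule poly_id)
    also have "\<dots> = X * ((kv+hw*kp)^2 - kv^2 - 2*kp*(1-kat)) + X^2 * (1 - kat^2 - 2*(kv+hw*kp)*\<tau>1) + \<tau>1^2*X^3"
      by (simp only: w2)
    also have "\<dots> = X * ((\<gamma>^2 - kv^2 - 2*kp*(1-kat)) + X*(1 - kat^2 - 2*\<gamma>*\<tau>1) + \<tau>1^2*X^2)"
      unfolding \<gamma>_def by (simp add: algebra_simps power2_eq_square power3_eq_cube)
    also have "\<dots> = X * ((1-kat)*((1+kat)*X - 2*kp) - kv^2)"
    proof -
      have a1: "\<tau>1^2*X^2 = \<gamma>^2" using tX by (metis power_mult_distrib)
      have a2: "X*(2*\<gamma>*\<tau>1) = 2*\<gamma>^2" using tX by (simp add: power2_eq_square algebra_simps)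
      have "(\<gamma>^2 - kv^2 - 2*kp*(1-kat)) + X*(1 - kat^2 - 2*\<gamma>*\<tau>1) + \<tau>1^2*X^2
          = (\<gamma>^2 - kv^2 - 2*kp*(1-kat)) + X*(1 - kat^2) - X*(2*\<gamma>*\<tau>1) + \<tau>1^2*X^2"
        by (simp add: algebra_simps)
      also have "\<dots> = (1-kat)*((1+kat)*X - 2*kp) - kv^2"
        unfolding a1 a2 by (simp add: algebra_simps power2_eq_square)
      finally show ?thesis by simp
    qed
    also have "\<dots> < 0"
    proof -
      have "(1+kat)*X - 2*kp \<ge> 0"
      proof -
        have "(1+kat)*X \<ge> 2*X" using k1 Xpos by (intro mult_right_mono) auto
        then show ?thesis using Xkp by linarith
      qed
      moreover have "1 - kat \<le> 0" using k1 by simp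
      ultimately have "(1-kat)*((1+kat)*X - 2*kp) \<le> 0" by (simp add: mult_nonpos_nonneg)
      moreover have "kv^2 > 0" using pos by simp
      ultimately have "(1-kat)*((1+kat)*X - 2*kp) - kv^2 < 0" by linarith
      then show ?thesis using Xpos by (simp add: mult_pos_neg)
    qed
    finally show False using le by linarith
  qed
  with katpos show ?thesis by (simp add: kat_def)
qed

lemma partB:
  assumes t0: "\<tau>0 > 0" and rho: "\<rho> > 1" and ka: "0 < ka" "ka < 1 / (1 + 1/\<rho>)"
    and hw: "hw > h_wlb \<tau>0 \<rho> ka"
  shows "\<exists>kp kv. kp > 0 \<and> kv > 0 \<and>
         (\<forall>g. admissible_gammas n g \<longrightarrow> (\<forall>\<tau>. 0 < \<tau> \<and> \<tau> \<le> \<tau>0 \<longrightarrow>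
            internally_stable kv kp hw \<tau> \<and> Hinf_norm (ka_tilde \<rho> n g ka) kv kp hw \<tau> \<le> 1))"
proof -
  define kmin where "kmin = (1-1/\<rho>)*ka"
  define kmax where "kmax = (1+1/\<rho>)*ka"
  have rp: "1/\<rho> > 0" "1/\<rho> < 1" using rho by auto
  have k: "0 < kmin" "kmin \<le> kmax" "kmax < 1"
  proof -
    show "0 < kmin" using rp ka by (simp add: kmin_def)
    show "kmin \<le> kmax" using rp ka unfolding kmin_def kmax_def by (intro mult_right_mono) auto
    have "1 + 1/\<rho> > 0" using rp by linarith
    then show "kmax < 1" using ka unfolding kmax_def by (simp add: pos_less_divide_eq mult.commute)
  qed
  have "h_wlb \<tau>0 \<rho> ka = 2*\<tau>0*(1-kmin)/(1-kmax^2)"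
    by (simp add: h_wlb_def kmin_def kmax_def power_mult_distrib)
  with hw have hw': "hw > 2*\<tau>0*(1-kmin)/(1-kmax^2)" by simp
  obtain kp kv where d: "kp > 0" "kv > 0" "\<forall>kat \<tau>. kmin \<le> kat \<and> kat \<le> kmax \<and> 0 < \<tau> \<and> \<tau> \<le> \<tau>0 \<longrightarrow>
     internally_stable kv kp hw \<tau> \<and> Hinf_norm kat kv kp hw \<tau> \<le> 1"
    using design[OF t0 k hw'] by blast
  have "\<forall>g. admissible_gammas n g \<longrightarrow> (\<forall>\<tau>. 0 < \<tau> \<and> \<tau> \<le> \<tau>0 \<longrightarrow>
            internally_stable kv kp hw \<tau> \<and> Hinf_norm (ka_tilde \<rho> n g ka) kv kp hw \<tau> \<le> 1)"
  proof (intro allI impI)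
    fix g \<tau> assume adm: "admissible_gammas n g" and t: "0 < \<tau> \<and> \<tau> \<le> \<tau>0"
    have "kmin \<le> ka_tilde \<rho> n g ka" "ka_tilde \<rho> n g ka \<le> kmax"
      using kat_bounds[OF rho ka(1) adm] by (simp_all add: kmin_def kmax_def)
    then show "internally_stable kv kp hw \<tau> \<and> Hinf_norm (ka_tilde \<rho> n g ka) kv kp hw \<tau> \<le> 1"
      using d(3) t by blast
  qed
  with d(1,2) show ?thesis by blast
qed
lemma hw_id:
  assumes s: "s > 1" and t: "t > 0" "(s^2+1)*t < s^2"
  shows "h_wlb \<tau>0 (s^2) t = \<tau>0*(s+1)^2/(s^2+1)
     + \<tau>0*((s+1)*(s^2+1)*t - (s-1)*s^2)^2/((s^2+1)*(s^4 - (s^2+1)^2*t^2))"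
proof -
  have "((s^2+1)*t)^2 < (s^2)^2" using t s by (intro power_strict_mono) auto
  then have E: "s^4 - (s^2+1)^2*t^2 > 0" by (simp add: power_mult_distrib power_mult[symmetric])
  have s2: "s^2 > 0" "s^2+1 > 0" using s by (auto simp: add_pos_pos)
  have e1: "1 - (1 - 1/s^2)*t = (s^2 - (s^2-1)*t)/s^2" using s2 by (simp add: field_simps)
  have a: "1 + 1/s^2 = (s^2+1)/s^2" using s2 by (simp add: field_simps)
  have s4: "(s^2)^2 = s^4" by (simp flip: power_mult)
  have "(1 + 1/s^2)^2*t^2 = (s^2+1)^2*t^2/s^4" unfolding a power_divide s4 by simp
  moreover have "s^4 > 0" using s by simp
  ultimately have e2: "1 - (1 + 1/s^2)^2*t^2 = (s^4 - (s^2+1)^2*t^2)/s^4"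
    by (simp add: diff_divide_distrib)
  have frac: "\<And>N E u::real. u > 0 \<Longrightarrow> E > 0 \<Longrightarrow> (N/u)/(E/(u*u)) = N*u/E"
    by (simp add: field_simps)
  have s4': "s^4 = s^2*s^2" by (simp flip: s4 add: power2_eq_square)
  have h: "h_wlb \<tau>0 (s^2) t = 2*\<tau>0*s^2*(s^2 - (s^2-1)*t)/(s^4 - (s^2+1)^2*t^2)"
  proof -
    have "h_wlb \<tau>0 (s^2) t = 2*\<tau>0*(((s^2 - (s^2-1)*t)/s^2)/((s^4 - (s^2+1)^2*t^2)/(s^2*s^2)))"
      unfolding h_wlb_def e1 e2 s4'[symmetric] by (simp add: mult.assoc)
    also have "\<dots> = 2*\<tau>0*((s^2 - (s^2-1)*t)*s^2/(s^4 - (s^2+1)^2*t^2))"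
      using frac[OF s2(1) E] by simp
    finally show ?thesis by (simp add: mult_ac)
  qed
  have poly: "2*\<tau>0*s^2*(s^2 - (s^2-1)*t)*(s^2+1) = \<tau>0*(s+1)^2*(s^4 - (s^2+1)^2*t^2)
     + \<tau>0*((s+1)*(s^2+1)*t - (s-1)*s^2)^2"
    by (simp add: algebra_simps power2_eq_square power3_eq_cube power4_eq_xxxx)
  have g1: "\<And>a b u e::real. u > 0 \<Longrightarrow> e > 0 \<Longrightarrow> a/u + b/(u*e) = (a*e + b)/(u*e)"
    by (simp add: field_simps)
  have g2: "\<And>c u e::real. u > 0 \<Longrightarrow> (c*u)/(u*e) = c/e" by simp
  show ?thesis unfolding h g1[OF s2(2) E] poly[symmetric] g2[OF s2(2)] ..
qed
lemma E_pos:
  assumes s: "s > 1" and t: "t > 0" "(s^2+1)*t < (s::real)^2"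
  shows "s^4 - (s^2+1)^2*t^2 > 0"
proof -
  have "((s^2+1)*t)^2 < (s^2)^2" using t s by (intro power_strict_mono) auto
  then show ?thesis by (simp add: power_mult_distrib power_mult[symmetric])
qed

lemma partC_s:
  assumes t0: "\<tau>0 > 0" and s: "s > (1::real)"
  shows "let kstar = ((1 - 1/s) / (1 + 1/s)) * (1 / (1 + 1/s^2)) in
      0 < kstar \<and> kstar < 1 / (1 + 1/s^2)
    \<and> (\<forall>ka. 0 < ka \<and> ka < 1 / (1 + 1/s^2) \<longrightarrow> h_wlb \<tau>0 (s^2) kstar \<le> h_wlb \<tau>0 (s^2) ka)
    \<and> (\<forall>ka. 0 < ka \<and> ka < 1 / (1 + 1/s^2) \<longrightarrow> h_wlb \<tau>0 (s^2) ka = h_wlb \<tau>0 (s^2) kstar \<longrightarrow> ka = kstar)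
    \<and> h_wlb \<tau>0 (s^2) kstar = \<tau>0 * (1 + 1/s)^2 / (1 + 1/s^2)
    \<and> (\<forall>hw. hw > h_wlb \<tau>0 (s^2) kstar \<longrightarrow>
         (\<exists>kp kv. kp > 0 \<and> kv > 0 \<and>
            (\<forall>g. admissible_gammas n g \<longrightarrow> (\<forall>\<tau>. 0 < \<tau> \<and> \<tau> \<le> \<tau>0 \<longrightarrow>
               Hinf_norm (ka_tilde (s^2) n g kstar) kv kp hw \<tau> \<le> 1))))"
proof -
  have s0: "s > 0" "s^2 > 0" "s^2 + 1 > 0" "s + 1 > 0" using s by (auto simp: add_pos_pos)
  define K where "K = (s-1)*s^2/((s+1)*(s^2+1))"
  have bnd: "1/(1+1/s^2) = s^2/(s^2+1)" using s0 by (simp add: field_simps)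
  have q0: "1 - 1/s = (s-1)/s" "1 + 1/s = (s+1)/s" using s0 by (simp_all add: field_simps)
  have cancel: "\<And>a b u::real. u \<noteq> 0 \<Longrightarrow> (a/u)/(b/u) = a/b" by simp
  have q1: "(1 - 1/s) / (1 + 1/s) = (s-1)/(s+1)" unfolding q0 using s0 by (simp only: cancel)
  have Keq: "((1 - 1/s) / (1 + 1/s)) * (1 / (1 + 1/s^2)) = K"
    unfolding K_def q1 bnd by simp
  have rng: "\<And>ka. ka < 1/(1+1/s^2) \<longleftrightarrow> (s^2+1)*ka < s^2"
    unfolding bnd using s0 by (simp add: pos_less_divide_eq mult.commute)
  have Kpos: "K > 0" unfolding K_def using s s0 by (intro divide_pos_pos mult_pos_pos) auto
  have dnz: "(s+1)*(s^2+1) \<noteq> 0" using s0 by simp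
  have KQ0: "(s+1)*(s^2+1)*K = (s-1)*s^2" unfolding K_def using dnz by simp
  then have KQ: "(s+1)*(s^2+1)*K - (s-1)*s^2 = 0" by simp
  have KR: "(s^2+1)*K < s^2"
  proof -
    have "(s+1)*((s^2+1)*K) = (s+1)*(s^2*((s-1)/(s+1)))" using KQ0 s0 by (simp add: mult_ac)
    moreover have sp1: "s + 1 \<noteq> 0" using s0 by linarith
    ultimately have "(s^2+1)*K = s^2*((s-1)/(s+1))"
      by (metis mult_cancel_left nonzero_mult_div_cancel_left times_divide_eq_right)
    moreover have "(s-1)/(s+1) < 1" using s0 by simp
    then have "s^2*((s-1)/(s+1)) < s^2*1" by (rule mult_strict_left_mono) (use s0 in auto)
    ultimately show ?thesis by simp
  qed
  have hK: "h_wlb \<tau>0 (s^2) K = \<tau>0*(s+1)^2/(s^2+1)"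
    using hw_id[OF s Kpos KR, of \<tau>0] KQ by simp
  have h1: "(1+1/s)^2 = (s+1)^2/s^2" unfolding q0(2) by (simp add: power_divide)
  have h2: "1 + 1/s^2 = (s^2+1)/s^2" using s0 by (simp add: field_simps)
  have h3: "(1 + 1/s)^2 / (1 + 1/s^2) = (s+1)^2/(s^2+1)" unfolding h1 h2
    by (rule cancel) (use s0 in simp)
  have hstar: "\<tau>0 * (1 + 1/s)^2 / (1 + 1/s^2) = \<tau>0*(s+1)^2/(s^2+1)"
    using h3 by (metis times_divide_eq_right)
  have mono: "h_wlb \<tau>0 (s^2) K \<le> h_wlb \<tau>0 (s^2) ka \<and> (h_wlb \<tau>0 (s^2) ka = h_wlb \<tau>0 (s^2) K \<longrightarrow> ka = K)"
    if ka: "0 < ka" "(s^2+1)*ka < s^2" for ka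
  proof -
    have E: "s^4 - (s^2+1)^2*ka^2 > 0" by (rule E_pos[OF s ka])
    define Q where "Q = (s+1)*(s^2+1)*ka - (s-1)*s^2"
    have D: "(s^2+1)*(s^4 - (s^2+1)^2*ka^2) > 0" using E s0 by simp
    have id: "h_wlb \<tau>0 (s^2) ka = h_wlb \<tau>0 (s^2) K + \<tau>0*Q^2/((s^2+1)*(s^4 - (s^2+1)^2*ka^2))"
      using hw_id[OF s ka, of \<tau>0] hK by (simp add: Q_def)
    have nn: "\<tau>0*Q^2/((s^2+1)*(s^4 - (s^2+1)^2*ka^2)) \<ge> 0"
      using D t0 by (intro divide_nonneg_nonneg) auto
    have "h_wlb \<tau>0 (s^2) ka = h_wlb \<tau>0 (s^2) K \<longrightarrow> ka = K"
    proof
      assume "h_wlb \<tau>0 (s^2) ka = h_wlb \<tau>0 (s^2) K"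
      then have "\<tau>0*Q^2/((s^2+1)*(s^4 - (s^2+1)^2*ka^2)) = 0" using id by simp
      then have "\<tau>0*Q^2 = 0" using D by (metis divide_eq_0_iff less_irrefl)
      then have "Q = 0" using t0 by simp
      then have "(s+1)*(s^2+1)*ka = (s+1)*(s^2+1)*K" using KQ unfolding Q_def by simp
      then show "ka = K" using s0 by simp
    qed
    with id nn show ?thesis by simp
  qed
  have last: "\<forall>hw. hw > h_wlb \<tau>0 (s^2) K \<longrightarrow>
         (\<exists>kp kv. kp > 0 \<and> kv > 0 \<and>
            (\<forall>g. admissible_gammas n g \<longrightarrow> (\<forall>\<tau>. 0 < \<tau> \<and> \<tau> \<le> \<tau>0 \<longrightarrow>
               Hinf_norm (ka_tilde (s^2) n g K) kv kp hw \<tau> \<le> 1)))"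
  proof (intro allI impI)
    fix hw assume "hw > h_wlb \<tau>0 (s^2) K"
    moreover have "s^2 > 1" using s by (simp add: one_less_power)
    moreover have "K < 1/(1+1/s^2)" using rng KR by simp
    ultimately obtain kp kv where "kp > 0" "kv > 0" "\<forall>g. admissible_gammas n g \<longrightarrow> (\<forall>\<tau>. 0 < \<tau> \<and> \<tau> \<le> \<tau>0 \<longrightarrow>
            internally_stable kv kp hw \<tau> \<and> Hinf_norm (ka_tilde (s^2) n g K) kv kp hw \<tau> \<le> 1)"
      using partB[OF t0 _ Kpos, of "s^2" hw n] by blast
    then show "\<exists>kp kv. kp > 0 \<and> kv > 0 \<and>
            (\<forall>g. admissible_gammas n g \<longrightarrow> (\<forall>\<tau>. 0 < \<tau> \<and> \<tau> \<le> \<tau>0 \<longrightarrow>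
               Hinf_norm (ka_tilde (s^2) n g K) kv kp hw \<tau> \<le> 1))" by blast
  qed
  have KR': "K < 1/(1+1/s^2)" using rng KR by blast
  have m1: "\<forall>ka. 0 < ka \<and> ka < 1 / (1 + 1/s^2) \<longrightarrow> h_wlb \<tau>0 (s^2) K \<le> h_wlb \<tau>0 (s^2) ka"
    using mono rng by blast
  have m2: "\<forall>ka. 0 < ka \<and> ka < 1 / (1 + 1/s^2) \<longrightarrow> h_wlb \<tau>0 (s^2) ka = h_wlb \<tau>0 (s^2) K \<longrightarrow> ka = K"
    using mono rng by blast
  have m3: "h_wlb \<tau>0 (s^2) K = \<tau>0 * (1 + 1/s)^2 / (1 + 1/s^2)" using hK hstar by simp
  show ?thesis unfolding Let_def Keq
    using Kpos KR' m1 m2 m3 last by blast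
qed

theorem theorem2:
  fixes \<tau>0 \<rho> :: real and n :: nat
  assumes "\<tau>0 > 0" and "\<rho> > 1" and "n \<ge> 1"
  shows
  \<comment> \<open>(a)\<close>
  "(\<forall>ka kp kv hw g. ka > 0 \<longrightarrow> kp > 0 \<longrightarrow> kv > 0 \<longrightarrow> hw > 0 \<longrightarrow> admissible_gammas n g \<longrightarrow>
      (\<forall>\<tau>. 0 < \<tau> \<and> \<tau> \<le> \<tau>0 \<longrightarrow> Hinf_norm (ka_tilde \<rho> n g ka) kv kp hw \<tau> \<le> 1) \<longrightarrow>
      0 < ka_tilde \<rho> n g ka \<and> ka_tilde \<rho> n g ka < 1)
   \<and>
  \<comment> \<open>(b)\<close>
   (\<forall>ka hw. 0 < ka \<and> ka < 1 / (1 + 1/\<rho>) \<longrightarrow> hw > h_wlb \<tau>0 \<rho> ka \<longrightarrow>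
      (\<exists>kp kv. kp > 0 \<and> kv > 0 \<and>
         (\<forall>g. admissible_gammas n g \<longrightarrow> (\<forall>\<tau>. 0 < \<tau> \<and> \<tau> \<le> \<tau>0 \<longrightarrow>
            internally_stable kv kp hw \<tau> \<and> Hinf_norm (ka_tilde \<rho> n g ka) kv kp hw \<tau> \<le> 1))))
   \<and>
  \<comment> \<open>(c)\<close>
   (let kstar = ((1 - 1/sqrt \<rho>) / (1 + 1/sqrt \<rho>)) * (1 / (1 + 1/\<rho>)) in
      0 < kstar \<and> kstar < 1 / (1 + 1/\<rho>)
    \<and> (\<forall>ka. 0 < ka \<and> ka < 1 / (1 + 1/\<rho>) \<longrightarrow> h_wlb \<tau>0 \<rho> kstar \<le> h_wlb \<tau>0 \<rho> ka)
    \<and> (\<forall>ka. 0 < ka \<and> ka < 1 / (1 + 1/\<rho>) \<longrightarrow> h_wlb \<tau>0 \<rho> ka = h_wlb \<tau>0 \<rho> kstar \<longrightarrow> ka = kstar)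
    \<and> h_wlb \<tau>0 \<rho> kstar = \<tau>0 * (1 + 1/sqrt \<rho>)^2 / (1 + 1/\<rho>)
    \<and> (\<forall>hw. hw > h_wlb \<tau>0 \<rho> kstar \<longrightarrow>
         (\<exists>kp kv. kp > 0 \<and> kv > 0 \<and>
            (\<forall>g. admissible_gammas n g \<longrightarrow> (\<forall>\<tau>. 0 < \<tau> \<and> \<tau> \<le> \<tau>0 \<longrightarrow>
               Hinf_norm (ka_tilde \<rho> n g kstar) kv kp hw \<tau> \<le> 1)))))"
proof -
  have A: "\<forall>ka kp kv hw g. ka > 0 \<longrightarrow> kp > 0 \<longrightarrow> kv > 0 \<longrightarrow> hw > 0 \<longrightarrow> admissible_gammas n g \<longrightarrow>
      (\<forall>\<tau>. 0 < \<tau> \<and> \<tau> \<le> \<tau>0 \<longrightarrow> Hinf_norm (ka_tilde \<rho> n g ka) kv kp hw \<tau> \<le> 1) \<longrightarrow>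
      0 < ka_tilde \<rho> n g ka \<and> ka_tilde \<rho> n g ka < 1"
    using partA[OF assms(2) _ _ _ _ _ assms(1)] by blast
  have B: "\<forall>ka hw. 0 < ka \<and> ka < 1 / (1 + 1/\<rho>) \<longrightarrow> hw > h_wlb \<tau>0 \<rho> ka \<longrightarrow>
      (\<exists>kp kv. kp > 0 \<and> kv > 0 \<and>
         (\<forall>g. admissible_gammas n g \<longrightarrow> (\<forall>\<tau>. 0 < \<tau> \<and> \<tau> \<le> \<tau>0 \<longrightarrow>
            internally_stable kv kp hw \<tau> \<and> Hinf_norm (ka_tilde \<rho> n g ka) kv kp hw \<tau> \<le> 1)))"
    using partB[OF assms(1) assms(2)] by blast
  define s where "s = sqrt \<rho>"
  have s1: "s > 1" using assms(2) by (simp add: s_def)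
  have rho_eq: "\<rho> = s^2" using assms(2) by (simp add: s_def)
  have sq: "sqrt \<rho> = s" by (simp add: s_def)
  have C: "let kstar = ((1 - 1/sqrt \<rho>) / (1 + 1/sqrt \<rho>)) * (1 / (1 + 1/\<rho>)) in
      0 < kstar \<and> kstar < 1 / (1 + 1/\<rho>)
    \<and> (\<forall>ka. 0 < ka \<and> ka < 1 / (1 + 1/\<rho>) \<longrightarrow> h_wlb \<tau>0 \<rho> kstar \<le> h_wlb \<tau>0 \<rho> ka)
    \<and> (\<forall>ka. 0 < ka \<and> ka < 1 / (1 + 1/\<rho>) \<longrightarrow> h_wlb \<tau>0 \<rho> ka = h_wlb \<tau>0 \<rho> kstar \<longrightarrow> ka = kstar)
    \<and> h_wlb \<tau>0 \<rho> kstar = \<tau>0 * (1 + 1/sqrt \<rho>)^2 / (1 + 1/\<rho>)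
    \<and> (\<forall>hw. hw > h_wlb \<tau>0 \<rho> kstar \<longrightarrow>
         (\<exists>kp kv. kp > 0 \<and> kv > 0 \<and>
            (\<forall>g. admissible_gammas n g \<longrightarrow> (\<forall>\<tau>. 0 < \<tau> \<and> \<tau> \<le> \<tau>0 \<longrightarrow>
               Hinf_norm (ka_tilde \<rho> n g kstar) kv kp hw \<tau> \<le> 1))))"
    unfolding sq using partC_s[OF assms(1) s1, of n] unfolding rho_eq[symmetric] .
  show ?thesis using A B C by blast
qed

end
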